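(* Let $A$ be a nontrivial closed class of decision tables from $\mathcal M_2^\infty$, $\psi$ a bounded complexity measure, $n\in\omega$, $T\in A_\psi(n)$, and suppose $G(T)>0$. Then there exists a decision table $T^*\in[T]$ such that $\psi^a(T^* )\le n$ and $\psi^d(T^* )\ge G(T)-1$.
   Context: Notation: $\omega=\{0,1,2,\dots\}$; $\mathcal P(\omega)$ is the set of nonempty finite subsets of $\omega$; $E_2=\{0,1\}$. $P=\{f_i:i\in\omega\}$ is a set of attributes, $f_i\neq f_j$ for $i\ne j$. Decision tables: $\mathcal M_2^\infty$ is the set of rectangular tables filled with numbers from $E_2$, whose columns are labeled with pairwise different attributes from $P$, whose rows are pairwise different, and each row of which is labeled with a set from $\mathcal P(\omega)$ (its set of decisions). The empty table (no rows) is denoted $\Lambda$ and belongs to $\mathcal M_2^\infty$. For $T\in\mathcal M_2^\infty$: $\Pi(T)$ is the intersection of the decision sets of all rows (common decisions); $\mathrm{At}(T)$ is the set of attributes labeling columns. For nonempty $T$, $\Omega_2(T)$ is the set of finite words (including the empty word $\lambda$) over the alphabet $\{(f_i,\delta):f_i\in\mathrm{At}(T),\delta\in E_2\}$; for $\alpha=(f_{i_1},\delta_1)\cdots(f_{i_m},\delta_m)$, $T\alpha$ is the subtable of $T$ consisting of the rows having value $\delta_j$ in the column $f_{i_j}$ for all $j$, and $T\lambda=T$. Operations: for $D\subseteq\mathrm{At}(T)$, $I(D,T)$ is obtained from $T$ by deleting the columns labeled with attributes from $D$ and, in each group of rows coinciding on the remaining columns, keeping only the first row; $I(\mathrm{At}(T),T)=\Lambda$.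 For $\nu:E_2^{|\mathrm{At}(T)|}\to\mathcal P(\omega)$, $J(\nu,T)$ is obtained by replacing the decision set of each row $\bar\delta$ by $\nu(\bar\delta)$. $[T]=\{J(\nu,I(D,T)):D\subseteq\mathrm{At}(T),\ \nu:E_2^{|\mathrm{At}(T)\setminus D|}\to\mathcal P(\omega)\}$; for nonempty $A\subseteq\mathcal M_2^\infty$, $[A]=\bigcup_{T\in A}[T]$. $A$ is a closed class if $[A]=A$; nontrivial if it contains a nonempty table. Decision trees: a $2$-decision tree is a finite directed rooted tree with at least two nodes in which the root and the edges leaving the root are unlabeled, each terminal node is labeled with a decision from $\omega$, and each other node is labeled with an attribute from $P$, each edge leaving such a node being labeled with a number from $E_2$. $\mathrm{At}(\Gamma)$ is the set of attributes labeling nodes of $\Gamma$. For a complete path $\tau=v_1,d_1,\dots,v_m,d_m,v_{m+1}$ (from the root to a terminal node), $\pi(\tau)=\lambda$ if $m=1$, and otherwise $\pi(\tau)=(f_{i_2},\delta_2)\cdots(f_{i_m},\delta_m)$ where $v_j$ is labeled $f_{i_j}$ and $d_j$ is labeled $\delta_j$; $T(\tau)=T\pi(\tau)$. For $T\ne\Lambda$, a nondeterministic decision tree for $T$ is a $2$-decision tree $\Gamma$ with $\mathrm{At}(\Gamma)\subseteq\mathrm{At}(T)$ such that every row of $T$ belongs to $T(\tau)$ for some complete path $\tau$, and for every complete path $\tau$ either $T(\tau)=\Lambda$ or the decision at the terminal node of $\tau$ belongs to $\Pi(T(\tau))$. A deterministic decision tree for $T$ is a nondeterministic decision tree for $T$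 in which, additionally, exactly one edge leaves the root and the edges leaving any node that is neither the root nor terminal are labeled with pairwise different numbers. Complexity measures: a partially bounded complexity measure is a function $\psi:P^*\to\omega$ on finite words over $P$ such that for all words $\alpha_1,\alpha_2$: $\psi(\alpha_1)=0$ iff $\alpha_1=\lambda$; $\psi(\alpha_1)$ is invariant under permutation of letters; $\psi(\alpha_1)\le\psi(\alpha_1\alpha_2)$; $\psi(\alpha_1\alpha_2)\le\psi(\alpha_1)+\psi(\alpha_2)$. It is bounded if in addition $\psi(\alpha)\ge|\alpha|$ for all $\alpha$. $\psi$ is extended to words $(f_{i_1},\delta_1)\cdots(f_{i_m},\delta_m)$ by $\psi(f_{i_1}\cdots f_{i_m})$ ($\psi(\lambda)=0$). For a $2$-decision tree $\Gamma$, $\psi(\Gamma)=\max_\tau\psi(\pi(\tau))$ over complete paths. For $T\ne\Lambda$, $\psi^d(T)$ (resp. $\psi^a(T)$) is the minimum of $\psi(\Gamma)$ over deterministic (resp. nondeterministic) decision trees $\Gamma$ for $T$; $\psi^d(\Lambda)=\psi^a(\Lambda)=0$. Parameters: $m_\psi(T)=\max\{\psi(f_i):f_i\in\mathrm{At}(T)\}$, $m_\psi(\Lambda)=0$; $A_\psi(n)=\{T\in A:m_\psi(T)\le n\}$. A word $\alpha\in\Omega_2(T)$ is annihilating for $T$ if $T\alpha=\Lambda$ and $\alpha$ contains no two letters $(f_i,\delta),(f_i,\sigma)$ with $\delta\ne\sigma$; it is irreducible if no word obtained from $\alpha$ by deleting some (at least one) letters is annihilating for $T$; $G(T)$ is the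 maximum length of an irreducible annihilating word for $T$ if one exists, and $0$ otherwise; $G(\Lambda)=0$. *)

theory Defs
  imports Main "HOL-Library.Multiset"
begin

text \<open>Attribute f_i is represented by the natural number i; E_2 = {0,1} is represented
by bool (False = 0, True = 1). A table is a pair (columns, rows): the list of
column attributes, and the list of rows, each row being a list of values (aligned with
the columns) together with its set of decisions.\<close>

type_synonym dtable = "nat list \<times> (bool list \<times> nat set) list"

definition cols :: "dtable \<Rightarrow> nat list" where "cols T = fst T"
definition rows :: "dtable \<Rightarrow> (bool list \<times> nat set) list" where "rows T = snd T"

definition Lambda :: dtable where "Lambda = ([], [])"

text \<open>Membership in M_2^infinity: pairwise different column attributes, rectangular,
pairwise different rows, decision sets nonempty finite; a table has no rows iff it is
the empty table Lambda.\<close>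
definition wf_table :: "dtable \<Rightarrow> bool" where
  "wf_table T \<longleftrightarrow> distinct (cols T)
     \<and> (\<forall>(r, d) \<in> set (rows T). length r = length (cols T) \<and> finite d \<and> d \<noteq> {})
     \<and> distinct (map fst (rows T))
     \<and> (rows T = [] \<longleftrightarrow> cols T = [])"

definition At :: "dtable \<Rightarrow> nat set" where "At T = set (cols T)"

definition Pi_dec :: "dtable \<Rightarrow> nat set" where
  "Pi_dec T = (\<Inter>(r, d) \<in> set (rows T). d)"

definition row_val :: "nat list \<Rightarrow> bool list \<Rightarrow> nat \<Rightarrow> bool" where
  "row_val cs r i = the (map_of (zip cs r) i)"

text \<open>Words over {(f_i,delta)} are lists of pairs (i, delta).\<close>
definition row_sat :: "nat list \<Rightarrow> bool list \<Rightarrow> (nat \<times> bool) list \<Rightarrow> bool" where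
  "row_sat cs r \<alpha> \<longleftrightarrow> (\<forall>(i, \<delta>) \<in> set \<alpha>. row_val cs r i = \<delta>)"

definition Omega2 :: "dtable \<Rightarrow> (nat \<times> bool) list set" where
  "Omega2 T = {\<alpha>. set (map fst \<alpha>) \<subseteq> At T}"

definition subtable :: "dtable \<Rightarrow> (nat \<times> bool) list \<Rightarrow> dtable" where
  "subtable T \<alpha> =
    (let rs = filter (\<lambda>(r, d). row_sat (cols T) r \<alpha>) (rows T)
     in if rs = [] then Lambda else (cols T, rs))"

definition I_op :: "nat set \<Rightarrow> dtable \<Rightarrow> dtable" where
  "I_op D T =
    (if At T \<subseteq> D then Lambda else
      (let cs = cols T; rs = rows T;
           cs' = filter (\<lambda>i. i \<notin> D) cs;
           proj = (\<lambda>r. map (row_val cs r) cs');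
           keep = filter (\<lambda>k. \<forall>j<k. proj (fst (rs ! j)) \<noteq> proj (fst (rs ! k))) [0..<length rs]
       in (cs', map (\<lambda>k. (proj (fst (rs ! k)), snd (rs ! k))) keep)))"

definition J_op :: "(bool list \<Rightarrow> nat set) \<Rightarrow> dtable \<Rightarrow> dtable" where
  "J_op \<nu> T = (cols T, map (\<lambda>(r, d). (r, \<nu> r)) (rows T))"

definition closure_table :: "dtable \<Rightarrow> dtable set" where
  "closure_table T = {J_op \<nu> (I_op D T) | D \<nu>.
      D \<subseteq> At T \<and> (\<forall>x. length x = card (At T - D) \<longrightarrow> finite (\<nu> x) \<and> \<nu> x \<noteq> {})}"

definition closure_class :: "dtable set \<Rightarrow> dtable set" where
  "closure_class A = (\<Union>T \<in> A. closure_table T)"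

definition closed_class :: "dtable set \<Rightarrow> bool" where
  "closed_class A \<longleftrightarrow> A \<noteq> {} \<and> (\<forall>T \<in> A. wf_table T) \<and> closure_class A = A"

definition nontrivial :: "dtable set \<Rightarrow> bool" where
  "nontrivial A \<longleftrightarrow> (\<exists>T \<in> A. T \<noteq> Lambda)"

text \<open>A tree is the
list of subtrees hanging below the (unlabelled) root via unlabelled edges.\<close>

datatype node = Leaf nat | Node nat "(bool \<times> node) list"

type_synonym dtree = "node list"

inductive wf_node :: "node \<Rightarrow> bool" where
  "wf_node (Leaf d)"
| "cs \<noteq> [] \<Longrightarrow> (\<And>\<delta> c. (\<delta>, c) \<in> set cs \<Longrightarrow> wf_node c) \<Longrightarrow> wf_node (Node i cs)"

definition wf_tree :: "dtree \<Rightarrow> bool" where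
  "wf_tree \<Gamma> \<longleftrightarrow> \<Gamma> \<noteq> [] \<and> (\<forall>c \<in> set \<Gamma>. wf_node c)"

inductive det_node :: "node \<Rightarrow> bool" where
  "det_node (Leaf d)"
| "distinct (map fst cs) \<Longrightarrow> (\<And>\<delta> c. (\<delta>, c) \<in> set cs \<Longrightarrow> det_node c) \<Longrightarrow> det_node (Node i cs)"

inductive attr_in :: "node \<Rightarrow> nat \<Rightarrow> bool" where
  "attr_in (Node i cs) i"
| "(\<delta>, c) \<in> set cs \<Longrightarrow> attr_in c j \<Longrightarrow> attr_in (Node i cs) j"

definition tree_At :: "dtree \<Rightarrow> nat set" where
  "tree_At \<Gamma> = {j. \<exists>c \<in> set \<Gamma>. attr_in c j}"

inductive node_path :: "node \<Rightarrow> (nat \<times> bool) list \<Rightarrow> nat \<Rightarrow> bool" where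
  "node_path (Leaf d) [] d"
| "(\<delta>, c) \<in> set cs \<Longrightarrow> node_path c w d \<Longrightarrow> node_path (Node i cs) ((i, \<delta>) # w) d"

text \<open>Complete paths tau of a tree, given by pi(tau) and the terminal decision.\<close>
definition tree_path :: "dtree \<Rightarrow> (nat \<times> bool) list \<Rightarrow> nat \<Rightarrow> bool" where
  "tree_path \<Gamma> w d \<longleftrightarrow> (\<exists>c \<in> set \<Gamma>. node_path c w d)"

definition is_ndt :: "dtable \<Rightarrow> dtree \<Rightarrow> bool" where
  "is_ndt T \<Gamma> \<longleftrightarrow> T \<noteq> Lambda \<and> wf_tree \<Gamma> \<and> tree_At \<Gamma> \<subseteq> At T
     \<and> (\<forall>r \<in> set (rows T). \<exists>w d. tree_path \<Gamma> w d \<and> r \<in> set (rows (subtable T w)))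
     \<and> (\<forall>w d. tree_path \<Gamma> w d \<longrightarrow> subtable T w = Lambda \<or> d \<in> Pi_dec (subtable T w))"

definition is_ddt :: "dtable \<Rightarrow> dtree \<Rightarrow> bool" where
  "is_ddt T \<Gamma> \<longleftrightarrow> is_ndt T \<Gamma> \<and> length \<Gamma> = 1 \<and> (\<forall>c \<in> set \<Gamma>. det_node c)"

definition partially_bounded_measure :: "(nat list \<Rightarrow> nat) \<Rightarrow> bool" where
  "partially_bounded_measure \<psi> \<longleftrightarrow>
     (\<forall>a. \<psi> a = 0 \<longleftrightarrow> a = [])
   \<and> (\<forall>a b. mset a = mset b \<longrightarrow> \<psi> a = \<psi> b)
   \<and> (\<forall>a b. \<psi> a \<le> \<psi> (a @ b))
   \<and> (\<forall>a b. \<psi> (a @ b) \<le> \<psi> a + \<psi> b)"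

definition bounded_measure :: "(nat list \<Rightarrow> nat) \<Rightarrow> bool" where
  "bounded_measure \<psi> \<longleftrightarrow> partially_bounded_measure \<psi> \<and> (\<forall>a. length a \<le> \<psi> a)"

definition psi_tree :: "(nat list \<Rightarrow> nat) \<Rightarrow> dtree \<Rightarrow> nat" where
  "psi_tree \<psi> \<Gamma> = Max {\<psi> (map fst w) | w d. tree_path \<Gamma> w d}"

definition psi_d :: "(nat list \<Rightarrow> nat) \<Rightarrow> dtable \<Rightarrow> nat" where
  "psi_d \<psi> T = (if T = Lambda then 0 else Inf {psi_tree \<psi> \<Gamma> | \<Gamma>. is_ddt T \<Gamma>})"

definition psi_a :: "(nat list \<Rightarrow> nat) \<Rightarrow> dtable \<Rightarrow> nat" where
  "psi_a \<psi> T = (if T = Lambda then 0 else Inf {psi_tree \<psi> \<Gamma> | \<Gamma>. is_ndt T \<Gamma>})"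

definition m_psi :: "(nat list \<Rightarrow> nat) \<Rightarrow> dtable \<Rightarrow> nat" where
  "m_psi \<psi> T = (if At T = {} then 0 else Max ((\<lambda>i. \<psi> [i]) ` At T))"

definition A_psi :: "dtable set \<Rightarrow> (nat list \<Rightarrow> nat) \<Rightarrow> nat \<Rightarrow> dtable set" where
  "A_psi A \<psi> n = {T \<in> A. m_psi \<psi> T \<le> n}"

definition annihilating :: "dtable \<Rightarrow> (nat \<times> bool) list \<Rightarrow> bool" where
  "annihilating T \<alpha> \<longleftrightarrow> \<alpha> \<in> Omega2 T \<and> subtable T \<alpha> = Lambda
     \<and> \<not> (\<exists>i \<delta> \<sigma>. (i, \<delta>) \<in> set \<alpha> \<and> (i, \<sigma>) \<in> set \<alpha> \<and> \<delta> \<noteq> \<sigma>)"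

text \<open>Words obtained by deleting at least one letter are the proper subsequences.\<close>
definition irreducible_ann :: "dtable \<Rightarrow> (nat \<times> bool) list \<Rightarrow> bool" where
  "irreducible_ann T \<alpha> \<longleftrightarrow> annihilating T \<alpha>
     \<and> \<not> (\<exists>\<beta> \<in> set (subseqs \<alpha>). length \<beta> < length \<alpha> \<and> annihilating T \<beta>)"

definition G :: "dtable \<Rightarrow> nat" where
  "G T = (if T = Lambda then 0
          else if \<exists>\<alpha>. irreducible_ann T \<alpha> then Max {length \<alpha> | \<alpha>. irreducible_ann T \<alpha>}
          else 0)"

end

theory Submission imports Defs begin
lemma filter_subseqs: "filter P xs \<in> set (subseqs xs)"
  by (induction xs) (auto simp: Let_def)
lemma remdups_subseqs: "remdups xs \<in> set (subseqs xs)"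
  by (induction xs) (auto simp: Let_def)

lemma subtable_rows: "set (rows (subtable T w)) = {p \<in> set (rows T). row_sat (cols T) (fst p) w}"
  unfolding subtable_def Let_def
  by (auto simp: rows_def Lambda_def split_def filter_empty_conv)

lemma subtable_Lambda: "subtable T w = Lambda \<longleftrightarrow> (\<forall>p\<in>set (rows T). \<not> row_sat (cols T) (fst p) w)"
  unfolding subtable_def Let_def
  by (auto simp: rows_def Lambda_def split_def filter_empty_conv)

lemma Pi_dec_iff: "d \<in> Pi_dec X \<longleftrightarrow> (\<forall>p\<in>set (rows X). d \<in> snd p)"
  by (auto simp: Pi_dec_def)

lemma row_val_map: "i \<in> set cs \<Longrightarrow> row_val cs (map f cs) i = f i"
  by (simp add: row_val_def map_of_zip_map)

lemma row_val_nth: "length x = length cs \<Longrightarrow> distinct cs \<Longrightarrow> j < length cs \<Longrightarrow> row_val cs x (cs ! j) = x ! j"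
  by (simp add: row_val_def map_of_zip_nth)

lemma row_val_ext:
  assumes "length x = length cs" "length y = length cs" "distinct cs"
    "\<forall>i\<in>set cs. row_val cs x i = row_val cs y i"
  shows "x = y"
proof (rule nth_equalityI)
  show "length x = length y" using assms by simp
  fix j assume "j < length x"
  then have "row_val cs x (cs ! j) = row_val cs y (cs ! j)" using assms by simp
  then show "x ! j = y ! j" using assms \<open>j < length x\<close> by (simp add: row_val_nth)
qed

lemma row_sat_zip: "length x = length cs \<Longrightarrow> distinct cs \<Longrightarrow> row_sat cs x (zip cs x)"
  unfolding row_sat_def by (auto simp: set_zip row_val_nth)

lemma row_sat_zip_eq:
  assumes "length x = length cs" "length y = length cs" "distinct cs" "row_sat cs y (zip cs x)"
  shows "y = x"
proof (rule row_val_ext[OF assms(2,1,3)], intro ballI)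
  fix i assume "i \<in> set cs"
  then obtain j where j: "j < length cs" "i = cs ! j" by (auto simp: in_set_conv_nth)
  then have "(i, x ! j) \<in> set (zip cs x)" using assms by (auto simp: set_zip)
  then have "row_val cs y i = x ! j" using assms(4) by (auto simp: row_sat_def)
  then show "row_val cs y i = row_val cs x i" using j assms by (simp add: row_val_nth)
qed

lemma I_cols: "\<not> At T \<subseteq> D \<Longrightarrow> cols (I_op D T) = filter (\<lambda>i. i \<notin> D) (cols T)"
  by (simp add: I_op_def Let_def cols_def)

lemma I_rows_sub:
  assumes "\<not> At T \<subseteq> D" "p \<in> set (rows (I_op D T))"
  shows "\<exists>r d. (r, d) \<in> set (rows T) \<and> p = (map (row_val (cols T) r) (filter (\<lambda>i. i \<notin> D) (cols T)), d)"
proof -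
  define rs where "rs = rows T"
  define proj where "proj = (\<lambda>r. map (row_val (cols T) r) (filter (\<lambda>i. i \<notin> D) (cols T)))"
  have "rows (I_op D T) = map (\<lambda>k. (proj (fst (rs ! k)), snd (rs ! k)))
     (filter (\<lambda>k. \<forall>j<k. proj (fst (rs ! j)) \<noteq> proj (fst (rs ! k))) [0..<length rs])"
    using assms(1) unfolding I_op_def Let_def rs_def proj_def by (simp add: rows_def cols_def)
  then obtain k where k: "k < length rs" "p = (proj (fst (rs ! k)), snd (rs ! k))"
    using assms(2) by auto
  then have "(fst (rs ! k), snd (rs ! k)) \<in> set (rows T)" by (simp add: rs_def)
  then show ?thesis using k(2) unfolding proj_def by blast
qed

lemma I_rows_sup:
  assumes "\<not> At T \<subseteq> D" "(r, d) \<in> set (rows T)"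
  shows "\<exists>d'. (map (row_val (cols T) r) (filter (\<lambda>i. i \<notin> D) (cols T)), d') \<in> set (rows (I_op D T))"
proof -
  define rs where "rs = rows T"
  define proj where "proj = (\<lambda>r. map (row_val (cols T) r) (filter (\<lambda>i. i \<notin> D) (cols T)))"
  obtain k where k: "k < length rs" "rs ! k = (r, d)" using assms(2) by (auto simp: rs_def in_set_conv_nth)
  define j where "j = (LEAST j. proj (fst (rs ! j)) = proj r)"
  have j1: "proj (fst (rs ! j)) = proj r" unfolding j_def by (rule LeastI[of _ k]) (simp add: k)
  have j2: "j \<le> k" unfolding j_def by (rule Least_le) (simp add: k)
  have j3: "\<forall>j'<j. proj (fst (rs ! j')) \<noteq> proj (fst (rs ! j))" 
    using j1 not_less_Least unfolding j_def by metis
  have "j \<in> set (filter (\<lambda>k. \<forall>j<k. proj (fst (rs ! j)) \<noteq> proj (fst (rs ! k))) [0..<length rs])"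
    using j2 j3 k by auto
  then have "(proj (fst (rs ! j)), snd (rs ! j)) \<in> set (rows (I_op D T))"
    using assms(1) unfolding I_op_def Let_def rs_def proj_def by (auto simp: rows_def cols_def)
  then show ?thesis using j1 unfolding proj_def by auto
qed

lemma J_cols: "cols (J_op \<nu> X) = cols X" by (simp add: J_op_def cols_def)
lemma J_rows: "set (rows (J_op \<nu> X)) = (\<lambda>(x, d). (x, \<nu> x)) ` set (rows X)"
  by (auto simp: J_op_def rows_def)

lemma wf_node_path: "wf_node c \<Longrightarrow> \<exists>w d. node_path c w d"
proof (induction rule: wf_node.induct)
  case (1 d) then show ?case by (auto intro: node_path.intros)
next
  case (2 cs i)
  obtain \<delta> c where "(\<delta>, c) \<in> set cs" using 2(1) by (metis list.set_sel(1) surj_pair)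
  then show ?case using 2(3) by (meson node_path.intros(2))
qed

lemma finite_node_paths: "wf_node c \<Longrightarrow> finite {(w, d). node_path c w d}"
proof (induction rule: wf_node.induct)
  case (1 d)
  have "{(w, d'). node_path (Leaf d) w d'} = {([], d)}"
    by (auto elim: node_path.cases intro: node_path.intros)
  then show ?case by simp
next
  case (2 cs i)
  have "{(w, d). node_path (Node i cs) w d} \<subseteq>
     (\<Union>p\<in>set cs. (\<lambda>(w, d). ((i, fst p) # w, d)) ` {(w, d). node_path (snd p) w d})"
  proof (clarify)
    fix w d assume "node_path (Node i cs) w d"
    then obtain \<delta> c w' where h: "w = (i, \<delta>) # w'" "(\<delta>, c) \<in> set cs" "node_path c w' d"
      by (cases rule: node_path.cases) auto
    show "(w, d) \<in> (\<Union>p\<in>set cs. (\<lambda>(w, d). ((i, fst p) # w, d)) ` {(w, d). node_path (snd p) w d})"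
      apply (rule UN_I[OF h(2)])
      apply (rule image_eqI[of _ _ "(w', d)"])
      using h by auto
  qed
  moreover have "finite (\<Union>p\<in>set cs. (\<lambda>(w, d). ((i, fst p) # w, d)) ` {(w, d). node_path (snd p) w d})"
    using 2(3) by auto
  ultimately show ?case by (rule finite_subset)
qed
lemma finite_psi_set: "wf_tree \<Gamma> \<Longrightarrow> finite {\<psi> (map fst w) | w d. tree_path \<Gamma> w d}"
proof -
  assume "wf_tree \<Gamma>"
  then have "finite (\<Union>c\<in>set \<Gamma>. {(w, d). node_path c w d})"
    by (auto simp: wf_tree_def finite_node_paths)
  moreover have "{\<psi> (map fst w) | w d. tree_path \<Gamma> w d} \<subseteq>
     (\<lambda>(w, d). \<psi> (map fst w)) ` (\<Union>c\<in>set \<Gamma>. {(w, d). node_path c w d})"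
    by (auto simp: tree_path_def)
  ultimately show ?thesis by (meson finite_imageI finite_subset)
qed

lemma psi_tree_ge: "wf_tree \<Gamma> \<Longrightarrow> tree_path \<Gamma> w d \<Longrightarrow> \<psi> (map fst w) \<le> psi_tree \<psi> \<Gamma>"
  unfolding psi_tree_def by (rule Max_ge[OF finite_psi_set]) auto

lemma psi_tree_le:
  assumes "wf_tree \<Gamma>" "\<And>w d. tree_path \<Gamma> w d \<Longrightarrow> \<psi> (map fst w) \<le> n"
  shows "psi_tree \<psi> \<Gamma> \<le> n"
proof -
  obtain c where "c \<in> set \<Gamma>" "wf_node c" using assms(1) unfolding wf_tree_def by (meson list.set_sel(1))
  then obtain w d where "tree_path \<Gamma> w d" using wf_node_path unfolding tree_path_def by blast
  then show ?thesis unfolding psi_tree_def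
    by (intro Max.boundedI[OF finite_psi_set[OF assms(1)]]) (auto intro: assms(2))
qed

lemma adversary:
  assumes "det_node c" "wf_node c"
    "\<forall>k\<in>U. \<forall>i. attr_in c i \<longrightarrow> (v k i = a i \<longleftrightarrow> i \<noteq> k)"
    "\<forall>k\<in>U. \<exists>w d. node_path c w d \<and> (\<forall>(i, b)\<in>set w. v k i = b)"
  shows "\<exists>w d. node_path c w d \<and> (\<forall>k\<in>U - fst ` set w. \<forall>(i, b)\<in>set w. v k i = b)"
  using assms
proof (induction c arbitrary: U rule: det_node.induct)
  case (1 d)
  have "node_path (Leaf d) [] d" by (rule node_path.intros)
  then show ?case by auto
next
  case (2 cs i)
  have wfc: "cs \<noteq> []" "\<And>\<delta> c. (\<delta>, c) \<in> set cs \<Longrightarrow> wf_node c"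
    using 2(4) by (auto elim: wf_node.cases)
  have ai: "attr_in (Node i cs) i" by (rule attr_in.intros)
  have key: "\<And>k. k \<in> U \<Longrightarrow> (v k i = a i) = (i \<noteq> k)"
  proof -
    fix k assume k: "k \<in> U"
    have "\<forall>j. attr_in (Node i cs) j \<longrightarrow> (v k j = a j) = (j \<noteq> k)" using 2(5) k by (rule bspec)
    then show "(v k i = a i) = (i \<noteq> k)" using ai by blast
  qed
  show ?case
  proof (cases "\<exists>c'. (a i, c') \<in> set cs")
    case True
    then obtain c' where c': "(a i, c') \<in> set cs" by blast
    have h3: "\<forall>k\<in>U - {i}. \<forall>j. attr_in c' j \<longrightarrow> (v k j = a j \<longleftrightarrow> j \<noteq> k)"
    proof (intro ballI allI impI)
      fix k j assume k: "k \<in> U - {i}" and j: "attr_in c' j"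
      have "attr_in (Node i cs) j" using c' j by (rule attr_in.intros(2))
      then show "(v k j = a j) = (j \<noteq> k)" using 2(5) k by blast
    qed
    have h4: "\<forall>k\<in>U - {i}. \<exists>w d. node_path c' w d \<and> (\<forall>(j, b)\<in>set w. v k j = b)"
    proof
      fix k assume k: "k \<in> U - {i}"
      then obtain w d where wd: "node_path (Node i cs) w d" "\<forall>(j, b)\<in>set w. v k j = b"
        using 2(6) by blast
      from wd(1) obtain \<delta> c'' w' where h: "w = (i, \<delta>) # w'" "(\<delta>, c'') \<in> set cs" "node_path c'' w' d"
        by (cases rule: node_path.cases) auto
      have "v k i = \<delta>" using wd(2) h(1) by auto
      moreover have "v k i = a i" using key k by auto
      ultimately have "\<delta> = a i" by simp
      then have "c'' = c'" using eq_key_imp_eq_value[OF 2(1), of "a i" c'' c'] h(2) c' by simp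
      then show "\<exists>w d. node_path c' w d \<and> (\<forall>(j, b)\<in>set w. v k j = b)"
        using h wd(2) by auto
    qed
    obtain w' d where w': "node_path c' w' d" "\<forall>k\<in>U - {i} - fst ` set w'. \<forall>(j, b)\<in>set w'. v k j = b"
      using 2(3)[OF c' wfc(2)[OF c'] h3 h4] by blast
    have "node_path (Node i cs) ((i, a i) # w') d" using c' w'(1) by (rule node_path.intros)
    moreover have "\<forall>k\<in>U - fst ` set ((i, a i) # w'). \<forall>(j, b)\<in>set ((i, a i) # w'). v k j = b"
    proof (intro ballI)
      fix k p assume k: "k \<in> U - fst ` set ((i, a i) # w')" and p: "p \<in> set ((i, a i) # w')"
      have "k \<noteq> i" using k by auto
      then have "v k i = a i" using key[of k] k by auto
      have k': "k \<in> U - {i} - fst ` set w'" using k by auto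
      from p have "p = (i, a i) \<or> p \<in> set w'" by simp
      then show "case p of (j, b) \<Rightarrow> v k j = b"
      proof
        assume "p = (i, a i)" then show ?thesis using \<open>v k i = a i\<close> by simp
      next
        assume "p \<in> set w'" then show ?thesis using bspec[OF bspec[OF w'(2) k']] by simp
      qed
    qed
    ultimately show ?thesis by (intro exI[of _ "(i, a i) # w'"] exI[of _ d] conjI)
  next
    case False
    have Ui: "U \<subseteq> {i}"
    proof
      fix k assume k: "k \<in> U"
      show "k \<in> {i}"
      proof (rule ccontr)
        assume "k \<notin> {i}"
        then have vk: "v k i = a i" using key[of k] k by auto
        obtain w d where wd: "node_path (Node i cs) w d" "\<forall>(j, b)\<in>set w. v k j = b"
          using 2(6) k by blast
        from wd(1) obtain \<delta> c'' w' where h: "w = (i, \<delta>) # w'" "(\<delta>, c'') \<in> set cs"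
          by (cases rule: node_path.cases) auto
        then have "\<delta> = a i" using wd(2) vk by auto
        then show False using h(2) False by blast
      qed
    qed
    obtain \<delta> c' where c': "(\<delta>, c') \<in> set cs" using wfc(1) by (metis list.set_sel(1) surj_pair)
    then obtain w' d where "node_path c' w' d" using wfc(2) wf_node_path by blast
    then have "node_path (Node i cs) ((i, \<delta>) # w') d" using c' by (rule node_path.intros(2)[rotated])
    moreover have "U - fst ` set ((i, \<delta>) # w') = {}" using Ui by auto
    ultimately show ?thesis by (intro exI[of _ "(i, \<delta>) # w'"] exI[of _ d] conjI) auto
  qed
qed

fun mk :: "((nat \<times> bool) list \<Rightarrow> nat) \<Rightarrow> nat list \<Rightarrow> (nat \<times> bool) list \<Rightarrow> node" where
  "mk p [] w = Leaf (p w)"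
| "mk p (i # is) w = Node i [(False, mk p is (w @ [(i, False)])), (True, mk p is (w @ [(i, True)]))]"

lemma mk_wf: "wf_node (mk p is w)"
proof (induction "is" arbitrary: w)
  case Nil then show ?case by (auto intro: wf_node.intros)
next
  case (Cons i "is") then show ?case by (simp, intro wf_node.intros(2)) auto
qed

lemma mk_det: "det_node (mk p is w)"
proof (induction "is" arbitrary: w)
  case Nil then show ?case by (auto intro: det_node.intros)
next
  case (Cons i "is") then show ?case by (simp, intro det_node.intros(2)) auto
qed

lemma mk_attr: "attr_in (mk p is w) j \<Longrightarrow> j \<in> set is"
proof (induction "is" arbitrary: w)
  case Nil
  from Nil.prems show ?case by (cases rule: attr_in.cases) auto
next
  case (Cons i "is")
  from Cons.prems have "attr_in (Node i [(False, mk p is (w @ [(i, False)])), (True, mk p is (w @ [(i, True)]))]) j"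
    by simp
  then show ?case
  proof (cases rule: attr_in.cases)
    case 1 then show ?thesis by simp
  next
    case (2 \<delta> c)
    then have "c = mk p is (w @ [(i, False)]) \<or> c = mk p is (w @ [(i, True)])" by auto
    then show ?thesis using Cons.IH 2(2) by auto
  qed
qed

lemma mk_path: "node_path (mk p is w0) w d \<Longrightarrow> \<exists>bs. length bs = length is \<and> w = zip is bs \<and> d = p (w0 @ w)"
proof (induction "is" arbitrary: w0 w)
  case Nil
  from Nil.prems have "node_path (Leaf (p w0)) w d" by simp
  then show ?case by (cases rule: node_path.cases) auto
next
  case (Cons i "is")
  from Cons.prems have "node_path (Node i [(False, mk p is (w0 @ [(i, False)])), (True, mk p is (w0 @ [(i, True)]))]) w d"
    by simp
  then obtain \<delta> c w' where h: "w = (i, \<delta>) # w'" "(\<delta>, c) \<in> set [(False, mk p is (w0 @ [(i, False)])), (True, mk p is (w0 @ [(i, True)]))]" "node_path c w' d"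
    by (cases rule: node_path.cases) auto
  then have "c = mk p is (w0 @ [(i, \<delta>)])" by (cases \<delta>) auto
  then obtain bs where "length bs = length is" "w' = zip is bs" "d = p ((w0 @ [(i, \<delta>)]) @ w')"
    using Cons.IH h(3) by blast
  then show ?case using h(1) by (intro exI[of _ "\<delta> # bs"]) auto
qed

lemma mk_path_ex: "length bs = length is \<Longrightarrow> \<exists>d. node_path (mk p is w0) (zip is bs) d"
proof (induction "is" arbitrary: w0 bs)
  case Nil then show ?case by (auto intro: node_path.intros)
next
  case (Cons i "is")
  then obtain b bs' where bs: "bs = b # bs'" "length bs' = length is" by (cases bs) auto
  then obtain d where "node_path (mk p is (w0 @ [(i, b)])) (zip is bs') d" using Cons.IH by blast
  moreover have "(b, mk p is (w0 @ [(i, b)])) \<in> set [(False, mk p is (w0 @ [(i, False)])), (True, mk p is (w0 @ [(i, True)]))]"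
    by (cases b) auto
  ultimately have "node_path (mk p (i # is) w0) ((i, b) # zip is bs') d"
    by (simp only: mk.simps) (rule node_path.intros(2))
  then show ?case using bs by auto
qed

lemma ddt_exists:
  assumes dc: "distinct (cols X)" and ne: "X \<noteq> Lambda"
    and rw: "\<forall>p\<in>set (rows X). length (fst p) = length (cols X) \<and> snd p = \<nu> (fst p)"
    and nn: "\<forall>x. \<nu> x \<noteq> {}"
  shows "\<exists>\<Gamma>. is_ddt X \<Gamma>"
proof -
  define pk where "pk = (\<lambda>w. SOME d. d \<in> Pi_dec (subtable X w))"
  define c where "c = mk pk (cols X) []"
  have tp: "tree_path [c] w d \<longleftrightarrow> node_path c w d" for w d by (simp add: tree_path_def)
  have wf: "wf_tree [c]" by (simp add: wf_tree_def c_def mk_wf)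
  have at: "tree_At [c] \<subseteq> At X"
    by (auto simp: tree_At_def At_def c_def dest: mk_attr)
  have cov: "\<forall>r \<in> set (rows X). \<exists>w d. tree_path [c] w d \<and> r \<in> set (rows (subtable X w))"
  proof
    fix r assume r: "r \<in> set (rows X)"
    then have len: "length (fst r) = length (cols X)" using rw by blast
    obtain d where "node_path c (zip (cols X) (fst r)) d" using mk_path_ex[OF len] c_def by blast
    moreover have "row_sat (cols X) (fst r) (zip (cols X) (fst r))" using row_sat_zip[OF len dc] .
    ultimately show "\<exists>w d. tree_path [c] w d \<and> r \<in> set (rows (subtable X w))"
      using r by (auto simp: tp subtable_rows)
  qed
  have pic: "\<forall>w d. tree_path [c] w d \<longrightarrow> subtable X w = Lambda \<or> d \<in> Pi_dec (subtable X w)"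
  proof (intro allI impI)
    fix w d assume "tree_path [c] w d"
    then have "node_path (mk pk (cols X) []) w d" by (simp add: tree_path_def c_def)
    then obtain bs where bs: "length bs = length (cols X)" "w = zip (cols X) bs" "d = pk w"
      using mk_path by fastforce
    show "subtable X w = Lambda \<or> d \<in> Pi_dec (subtable X w)"
    proof (cases "subtable X w = Lambda")
      case False
      obtain e where e: "e \<in> \<nu> bs" using nn by blast
      have "e \<in> Pi_dec (subtable X w)"
        unfolding Pi_dec_iff subtable_rows
      proof clarify
        fix x dd assume q: "(x, dd) \<in> set (rows X)" "row_sat (cols X) (fst (x, dd)) w"
        then have "length x = length (cols X)" "dd = \<nu> x" using rw by auto
        moreover have "x = bs" using row_sat_zip_eq[OF bs(1) _ dc] q bs(2) calculation(1) by auto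
        ultimately show "e \<in> snd (x, dd)" using e by simp
      qed
      then have "pk w \<in> Pi_dec (subtable X w)" unfolding pk_def by (rule someI)
      then show ?thesis using bs(3) by simp
    qed simp
  qed
  have "is_ddt X [c]"
    unfolding is_ddt_def is_ndt_def using ne wf at cov pic by (simp add: c_def mk_det)
  then show ?thesis by blast
qed

lemma subtable_set_eq: "set \<alpha> = set \<beta> \<Longrightarrow> subtable T \<alpha> = subtable T \<beta>"
  by (simp add: subtable_def row_sat_def)

lemma irr_distinct:
  assumes "irreducible_ann T \<alpha>"
  shows "distinct (map fst \<alpha>)"
proof -
  have ann: "annihilating T \<alpha>" and irr: "\<not> (\<exists>\<beta> \<in> set (subseqs \<alpha>). length \<beta> < length \<alpha> \<and> annihilating T \<beta>)"
    using assms by (auto simp: irreducible_ann_def)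
  have d: "distinct \<alpha>"
  proof (rule ccontr)
    assume nd: "\<not> distinct \<alpha>"
    have "length (remdups \<alpha>) < length \<alpha>"
      using nd length_remdups_leq[of \<alpha>] length_remdups_eq[of \<alpha>] by (simp add: order_less_le)
    moreover have "annihilating T (remdups \<alpha>)"
      using ann subtable_set_eq[of "remdups \<alpha>" \<alpha> T] by (auto simp: annihilating_def Omega2_def)
    ultimately show False using irr remdups_subseqs by blast
  qed
  have "inj_on fst (set \<alpha>)"
    using ann unfolding annihilating_def inj_on_def by force
  then show ?thesis using d by (simp add: distinct_map)
qed

lemma irr_length:
  assumes "irreducible_ann T \<alpha>"
  shows "length \<alpha> \<le> card (At T)"
proof -
  have "length \<alpha> = card (set (map fst \<alpha>))"
    using irr_distinct[OF assms] by (metis distinct_card length_map)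
  also have "\<dots> \<le> card (At T)"
    using assms by (intro card_mono) (auto simp: irreducible_ann_def annihilating_def Omega2_def At_def)
  finally show ?thesis .
qed

lemma single_path: "node_path (Node k [(b, Leaf e)]) w d \<longleftrightarrow> w = [(k, b)] \<and> d = e"
proof
  assume "node_path (Node k [(b, Leaf e)]) w d"
  then obtain \<delta> c w' where h: "w = (k, \<delta>) # w'" "(\<delta>, c) \<in> set [(b, Leaf e)]" "node_path c w' d"
    by (cases rule: node_path.cases) auto
  then have "node_path (Leaf e) w' d" "\<delta> = b" by auto
  then show "w = [(k, b)] \<and> d = e" using h(1) by (cases rule: node_path.cases) auto
next
  assume "w = [(k, b)] \<and> d = e"
  moreover have "node_path (Node k [(b, Leaf e)]) [(k, b)] e"
    by (rule node_path.intros(2)) (auto intro: node_path.intros)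
  ultimately show "node_path (Node k [(b, Leaf e)]) w d" by simp
qed

lemma single_attr:
  assumes "attr_in (Node k [(b, Leaf e)]) j" shows "j = k"
proof -
  have L: "\<not> attr_in (Leaf e) j'" for j' by (auto elim: attr_in.cases)
  from assms show ?thesis by (cases rule: attr_in.cases) (use L in auto)
qed

theorem lemma13:
  fixes A :: "dtable set" and \<psi> :: "nat list \<Rightarrow> nat" and n :: nat and T :: dtable
  assumes "closed_class A" and "nontrivial A" and "bounded_measure \<psi>"
    and "T \<in> A_psi A \<psi> n" and "G T > 0"
  shows "\<exists>T' \<in> closure_table T. psi_a \<psi> T' \<le> n \<and> psi_d \<psi> T' \<ge> G T - 1"
proof -
  have TA: "T \<in> A" and mT: "m_psi \<psi> T \<le> n" using assms(4) by (auto simp: A_psi_def)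
  have wfT: "wf_table T" using assms(1) TA by (auto simp: closed_class_def)
  have TnL: "T \<noteq> Lambda" and exirr: "\<exists>\<alpha>. irreducible_ann T \<alpha>"
    and GT: "G T = Max {length \<alpha> | \<alpha>. irreducible_ann T \<alpha>}"
    using assms(5) by (auto simp: G_def split: if_splits)
  have finAt: "finite (At T)" by (simp add: At_def)
  have "finite {length \<alpha> | \<alpha>. irreducible_ann T \<alpha>}"
    by (rule finite_subset[of _ "{..card (At T)}"]) (auto dest: irr_length)
  then have "G T \<in> {length \<alpha> | \<alpha>. irreducible_ann T \<alpha>}" unfolding GT
    by (rule Max_in) (use exirr in auto)
  then obtain \<alpha> where irr: "irreducible_ann T \<alpha>" and lenG: "length \<alpha> = G T" by auto
  have ann: "annihilating T \<alpha>"
    and irr2: "\<And>\<beta>. \<beta> \<in> set (subseqs \<alpha>) \<Longrightarrow> length \<beta> < length \<alpha> \<Longrightarrow> \<not> annihilating T \<beta>"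
    using irr by (auto simp: irreducible_ann_def)
  have dist: "distinct (map fst \<alpha>)" by (rule irr_distinct[OF irr])
  define K where "K = set (map fst \<alpha>)"
  define a where "a = (\<lambda>k. the (map_of \<alpha> k))"
  have aK: "\<And>k \<delta>. (k, \<delta>) \<in> set \<alpha> \<Longrightarrow> a k = \<delta>" using dist by (simp add: a_def)
  have KaK: "\<And>k. k \<in> K \<Longrightarrow> (k, a k) \<in> set \<alpha>" using aK by (force simp: K_def)
  have KAt: "K \<subseteq> At T" using ann by (auto simp: K_def annihilating_def Omega2_def)
  have cardK: "card K = length \<alpha>" unfolding K_def using distinct_card[OF dist] by (simp only: length_map)
  have finK: "finite K" by (simp add: K_def)
  have Kne: "K \<noteq> {}" using assms(5) lenG by (auto simp: K_def)
  define D where "D = At T - K"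
  have nD: "\<not> At T \<subseteq> D" using KAt Kne by (auto simp: D_def)
  define cs' where "cs' = filter (\<lambda>i. i \<notin> D) (cols T)"
  have setcs: "set cs' = K" using KAt by (auto simp: cs'_def D_def At_def)
  have dcs: "distinct cs'" using wfT by (simp add: cs'_def wf_table_def)
  define proj where "proj = (\<lambda>r. map (row_val (cols T) r) cs')"
  have projv: "\<And>r i. i \<in> K \<Longrightarrow> row_val cs' (proj r) i = row_val (cols T) r i"
    using setcs by (simp add: proj_def row_val_map)
  define dis where "dis = (\<lambda>x. {k \<in> K. row_val cs' x k \<noteq> a k})"
  define \<nu> where "\<nu> = (\<lambda>x. if dis x = {} then {0} else dis x)"
  have \<nu>ne: "\<And>x. \<nu> x \<noteq> {}" and \<nu>fin: "\<And>x. finite (\<nu> x)"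
    using finK by (auto simp: \<nu>_def dis_def)
  define T' where "T' = J_op \<nu> (I_op D T)"
  have inCl: "T' \<in> closure_table T"
    unfolding closure_table_def T'_def using \<nu>ne \<nu>fin by (auto simp: D_def)
  have colsT': "cols T' = cs'" using nD by (simp add: T'_def J_cols I_cols cs'_def)
  have AtT': "At T' = K" using colsT' setcs by (simp add: At_def)
  have rowsT': "\<And>p. p \<in> set (rows T') \<Longrightarrow> \<exists>r d. (r, d) \<in> set (rows T) \<and> p = (proj r, \<nu> (proj r))"
    using I_rows_sub[OF nD] unfolding T'_def J_rows proj_def cs'_def by fastforce
  have rowsT'2: "\<And>r d. (r, d) \<in> set (rows T) \<Longrightarrow> (proj r, \<nu> (proj r)) \<in> set (rows T')"
  proof -
    fix r d assume "(r, d) \<in> set (rows T)"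
    then obtain d' where "(proj r, d') \<in> set (rows (I_op D T))"
      using I_rows_sup[OF nD] unfolding proj_def cs'_def by blast
    then show "(proj r, \<nu> (proj r)) \<in> set (rows T')" unfolding T'_def J_rows by force
  qed
  have rowsTne: "rows T \<noteq> []" using wfT TnL
    by (cases T) (auto simp: wf_table_def rows_def cols_def Lambda_def)
  then obtain r0 d0 where "(r0, d0) \<in> set (rows T)" by (metis list.set_sel(1) surj_pair)
  then have r0: "(proj r0, \<nu> (proj r0)) \<in> set (rows T')" by (rule rowsT'2)
  have T'nL: "T' \<noteq> Lambda" using r0 by (auto simp: Lambda_def rows_def)
  have viol: "\<And>r d. (r, d) \<in> set (rows T) \<Longrightarrow> \<exists>(k, \<delta>) \<in> set \<alpha>. row_val (cols T) r k \<noteq> \<delta>"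
  proof -
    fix r d assume "(r, d) \<in> set (rows T)"
    moreover have "subtable T \<alpha> = Lambda" using ann by (simp add: annihilating_def)
    ultimately have "\<not> row_sat (cols T) r \<alpha>" unfolding subtable_Lambda by force
    then show "\<exists>(k, \<delta>) \<in> set \<alpha>. row_val (cols T) r k \<noteq> \<delta>" by (auto simp: row_sat_def)
  qed
  have xk: "\<forall>k\<in>K. \<exists>x. (x, \<nu> x) \<in> set (rows T') \<and> (\<forall>i\<in>K. (row_val cs' x i = a i) = (i \<noteq> k))"
  proof
    fix k assume kK: "k \<in> K"
    have kd: "(k, a k) \<in> set \<alpha>" using KaK[OF kK] .
    define \<beta> where "\<beta> = filter (\<lambda>p. p \<noteq> (k, a k)) \<alpha>"
    have "\<beta> \<in> set (subseqs \<alpha>)" by (simp add: \<beta>_def filter_subseqs)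
    moreover have "length \<beta> < length \<alpha>" unfolding \<beta>_def by (rule length_filter_less[OF kd]) simp
    ultimately have nann: "\<not> annihilating T \<beta>" by (rule irr2)
    have "\<beta> \<in> Omega2 T" using ann by (auto simp: annihilating_def Omega2_def \<beta>_def)
    moreover have "\<not> (\<exists>i \<delta> \<sigma>. (i, \<delta>) \<in> set \<beta> \<and> (i, \<sigma>) \<in> set \<beta> \<and> \<delta> \<noteq> \<sigma>)"
      using ann unfolding annihilating_def \<beta>_def by auto
    ultimately have "subtable T \<beta> \<noteq> Lambda" using nann by (auto simp: annihilating_def)
    then obtain r d where rd: "(r, d) \<in> set (rows T)" "row_sat (cols T) r \<beta>"
      unfolding subtable_Lambda by auto
    have sat: "\<And>i. i \<in> K \<Longrightarrow> i \<noteq> k \<Longrightarrow> row_val (cols T) r i = a i"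
    proof -
      fix i assume "i \<in> K" "i \<noteq> k"
      then have "(i, a i) \<in> set \<beta>" using KaK by (auto simp: \<beta>_def)
      then show "row_val (cols T) r i = a i" using rd(2) by (auto simp: row_sat_def)
    qed
    obtain k' \<delta>' where kd': "(k', \<delta>') \<in> set \<alpha>" "row_val (cols T) r k' \<noteq> \<delta>'"
      using viol[OF rd(1)] by auto
    have "k' \<in> K" using kd' by (force simp: K_def)
    moreover have "a k' = \<delta>'" using aK kd' by blast
    ultimately have "k' = k" using sat kd' by blast
    then have vk: "row_val (cols T) r k \<noteq> a k" using kd' aK by blast
    have "(proj r, \<nu> (proj r)) \<in> set (rows T')" using rowsT'2[OF rd(1)] .
    moreover have "\<forall>i\<in>K. (row_val cs' (proj r) i = a i) = (i \<noteq> k)"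
      using projv sat vk by auto
    ultimately show "\<exists>x. (x, \<nu> x) \<in> set (rows T') \<and> (\<forall>i\<in>K. (row_val cs' x i = a i) = (i \<noteq> k))"
      by blast
  qed
  have part1: "psi_a \<psi> T' \<le> n"
  proof -
    define \<Gamma>a where "\<Gamma>a = map (\<lambda>(k, \<delta>). Node k [(\<not> \<delta>, Leaf k)]) \<alpha>"
    have tpa: "tree_path \<Gamma>a w d \<longleftrightarrow> (\<exists>(k, \<delta>)\<in>set \<alpha>. w = [(k, \<not> \<delta>)] \<and> d = k)" for w d
    proof
      assume "tree_path \<Gamma>a w d"
      then obtain k \<delta> where "(k, \<delta>) \<in> set \<alpha>" "node_path (Node k [(\<not> \<delta>, Leaf k)]) w d"
        by (auto simp: tree_path_def \<Gamma>a_def)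
      then show "\<exists>(k, \<delta>)\<in>set \<alpha>. w = [(k, \<not> \<delta>)] \<and> d = k" by (auto simp: single_path)
    next
      assume "\<exists>(k, \<delta>)\<in>set \<alpha>. w = [(k, \<not> \<delta>)] \<and> d = k"
      then obtain k \<delta> where kd: "(k, \<delta>) \<in> set \<alpha>" "w = [(k, \<not> \<delta>)]" "d = k" by auto
      then have "node_path (Node k [(\<not> \<delta>, Leaf k)]) w d" by (simp add: single_path)
      then show "tree_path \<Gamma>a w d" unfolding tree_path_def \<Gamma>a_def using kd(1) by force
    qed
    have "\<alpha> \<noteq> []" using Kne by (auto simp: K_def)
    moreover have "wf_node (Node k [(b, Leaf e)])" for k b e
      by (rule wf_node.intros(2)) (auto intro: wf_node.intros)
    ultimately have wfa: "wf_tree \<Gamma>a" by (auto simp: wf_tree_def \<Gamma>a_def)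
    have ata: "tree_At \<Gamma>a \<subseteq> At T'"
      by (auto simp: tree_At_def \<Gamma>a_def AtT' K_def dest!: single_attr) force
    have cov: "\<forall>p\<in>set (rows T'). \<exists>w d. tree_path \<Gamma>a w d \<and> p \<in> set (rows (subtable T' w))"
    proof
      fix p assume "p \<in> set (rows T')"
      then obtain r d where rd: "(r, d) \<in> set (rows T)" "p = (proj r, \<nu> (proj r))" using rowsT' by blast
      obtain k \<delta> where kd: "(k, \<delta>) \<in> set \<alpha>" "row_val (cols T) r k \<noteq> \<delta>" using viol[OF rd(1)] by auto
      have "k \<in> K" using kd by (force simp: K_def)
      then have "row_val cs' (proj r) k = (\<not> \<delta>)" using projv kd(2) by auto
      then have "row_sat cs' (proj r) [(k, \<not> \<delta>)]" by (simp add: row_sat_def)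
      then have "p \<in> set (rows (subtable T' [(k, \<not> \<delta>)]))"
        using \<open>p \<in> set (rows T')\<close> rd(2) by (simp add: subtable_rows colsT')
      moreover have "tree_path \<Gamma>a [(k, \<not> \<delta>)] k" using kd(1) tpa by blast
      ultimately show "\<exists>w d. tree_path \<Gamma>a w d \<and> p \<in> set (rows (subtable T' w))" by blast
    qed
    have pic: "\<forall>w d. tree_path \<Gamma>a w d \<longrightarrow> subtable T' w = Lambda \<or> d \<in> Pi_dec (subtable T' w)"
    proof (intro allI impI disjI2)
      fix w d assume "tree_path \<Gamma>a w d"
      then obtain k \<delta> where kd: "(k, \<delta>) \<in> set \<alpha>" "w = [(k, \<not> \<delta>)]" "d = k" using tpa by blast
      have kK: "k \<in> K" using kd by (force simp: K_def)
      have ak: "a k = \<delta>" using aK kd by blast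
      show "d \<in> Pi_dec (subtable T' w)"
        unfolding Pi_dec_iff subtable_rows colsT'
      proof clarify
        fix x e assume q: "(x, e) \<in> set (rows T')" "row_sat cs' (fst (x, e)) w"
        then obtain r dd where "(r, dd) \<in> set (rows T)" "(x, e) = (proj r, \<nu> (proj r))" using rowsT' by blast
        then have xe: "e = \<nu> x" by simp
        have "row_val cs' x k = (\<not> \<delta>)" using q(2) kd(2) by (simp add: row_sat_def)
        then have "k \<in> dis x" using kK ak by (auto simp: dis_def)
        then show "d \<in> snd (x, e)" using xe kd(3) by (auto simp: \<nu>_def)
      qed
    qed
    have ndt: "is_ndt T' \<Gamma>a" unfolding is_ndt_def using T'nL wfa ata cov pic by blast
    have "psi_tree \<psi> \<Gamma>a \<le> n"
    proof (rule psi_tree_le[OF wfa])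
      fix w d assume "tree_path \<Gamma>a w d"
      then obtain k \<delta> where kd: "(k, \<delta>) \<in> set \<alpha>" "w = [(k, \<not> \<delta>)]" using tpa by blast
      have kA: "k \<in> At T" using kd KAt by (force simp: K_def)
      then have "\<psi> [k] \<le> Max ((\<lambda>i. \<psi> [i]) ` At T)" using finAt by (intro Max_ge) auto
      then have "\<psi> [k] \<le> m_psi \<psi> T" using kA by (auto simp: m_psi_def)
      then show "\<psi> (map fst w) \<le> n" using kd(2) mT by simp
    qed
    moreover have "psi_a \<psi> T' \<le> psi_tree \<psi> \<Gamma>a"
      unfolding psi_a_def using T'nL ndt by (auto intro: wellorder_Inf_le1)
    ultimately show ?thesis by simp
  qed
  have part2: "G T - 1 \<le> psi_d \<psi> T'"
  proof -
    obtain xkf where xkf: "\<forall>k\<in>K. (xkf k, \<nu> (xkf k)) \<in> set (rows T') \<and> (\<forall>i\<in>K. (row_val cs' (xkf k) i = a i) = (i \<noteq> k))"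
      using xk by metis
    have \<nu>xk: "\<nu> (xkf k) = {k}" if "k \<in> K" for k
    proof -
      have "dis (xkf k) = {k}" using xkf that by (auto simp: dis_def)
      then show ?thesis by (simp add: \<nu>_def)
    qed
    have lb: "length \<alpha> \<le> psi_tree \<psi> \<Gamma> + 1" if dd: "is_ddt T' \<Gamma>" for \<Gamma>
    proof -
      obtain c where \<Gamma>: "\<Gamma> = [c]" using dd by (auto simp: is_ddt_def length_Suc_conv)
      have ndt: "is_ndt T' \<Gamma>" and det: "det_node c" using dd \<Gamma> by (auto simp: is_ddt_def)
      have wfG: "wf_tree \<Gamma>" using ndt by (simp add: is_ndt_def)
      then have wfc: "wf_node c" using \<Gamma> by (simp add: wf_tree_def)
      have atc: "tree_At \<Gamma> \<subseteq> K" using ndt AtT' by (simp add: is_ndt_def)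
      have h3: "\<forall>k\<in>K. \<forall>i. attr_in c i \<longrightarrow> (row_val cs' (xkf k) i = a i) = (i \<noteq> k)"
      proof (intro ballI allI impI)
        fix k i assume k: "k \<in> K" and i: "attr_in c i"
        then have "i \<in> K" using atc \<Gamma> by (auto simp: tree_At_def)
        then show "(row_val cs' (xkf k) i = a i) = (i \<noteq> k)" using xkf k by blast
      qed
      have h4: "\<forall>k\<in>K. \<exists>w d. node_path c w d \<and> (\<forall>(i, b)\<in>set w. row_val cs' (xkf k) i = b)"
      proof
        fix k assume k: "k \<in> K"
        then have "(xkf k, \<nu> (xkf k)) \<in> set (rows T')" using xkf by blast
        then obtain w d where "tree_path \<Gamma> w d" "(xkf k, \<nu> (xkf k)) \<in> set (rows (subtable T' w))"
          using ndt unfolding is_ndt_def by blast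
        then show "\<exists>w d. node_path c w d \<and> (\<forall>(i, b)\<in>set w. row_val cs' (xkf k) i = b)"
          using \<Gamma> by (auto simp: tree_path_def subtable_rows colsT' row_sat_def)
      qed
      obtain w d where wd: "node_path c w d"
        "\<forall>k\<in>K - fst ` set w. \<forall>(i, b)\<in>set w. row_val cs' (xkf k) i = b"
        using adversary[OF det wfc h3 h4] by blast
      have tpw: "tree_path \<Gamma> w d" using wd(1) \<Gamma> by (simp add: tree_path_def)
      have sub: "K \<subseteq> fst ` set w \<union> {d}"
      proof
        fix k assume k: "k \<in> K"
        show "k \<in> fst ` set w \<union> {d}"
        proof (cases "k \<in> fst ` set w")
          case False
          then have "row_sat cs' (xkf k) w" using wd(2) k by (auto simp: row_sat_def)
          moreover have "(xkf k, \<nu> (xkf k)) \<in> set (rows T')" using xkf k by blast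
          ultimately have inr: "(xkf k, \<nu> (xkf k)) \<in> set (rows (subtable T' w))"
            by (simp add: subtable_rows colsT')
          then have "subtable T' w \<noteq> Lambda" by (auto simp: Lambda_def rows_def)
          then have "d \<in> Pi_dec (subtable T' w)" using ndt tpw unfolding is_ndt_def by blast
          then have "d \<in> \<nu> (xkf k)" using inr unfolding Pi_dec_iff by force
          then show ?thesis using \<nu>xk[OF k] by simp
        qed simp
      qed
      have "card K \<le> card (fst ` set w \<union> {d})" by (rule card_mono[OF _ sub]) simp
      also have "\<dots> \<le> card (fst ` set w) + card {d}" by (rule card_Un_le)
      also have "\<dots> \<le> length w + 1" using card_image_le[of "set w" fst] card_length[of w] by simp
      also have "length w \<le> \<psi> (map fst w)"
        using assms(3) unfolding bounded_measure_def by (metis length_map)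
      also have "\<psi> (map fst w) \<le> psi_tree \<psi> \<Gamma>" by (rule psi_tree_ge[OF wfG tpw])
      finally show ?thesis using cardK by simp
    qed
    have rwT': "\<forall>p\<in>set (rows T'). length (fst p) = length (cols T') \<and> snd p = \<nu> (fst p)"
      using rowsT' colsT' by (fastforce simp: proj_def)
    obtain \<Gamma>0 where "is_ddt T' \<Gamma>0"
      using ddt_exists[of T' \<nu>] dcs colsT' T'nL rwT' \<nu>ne by auto
    then have ne: "{psi_tree \<psi> \<Gamma> |\<Gamma>. is_ddt T' \<Gamma>} \<noteq> {}" by blast
    have "length \<alpha> - 1 \<le> Inf {psi_tree \<psi> \<Gamma> |\<Gamma>. is_ddt T' \<Gamma>}"
      by (rule cInf_greatest[OF ne]) (use lb in fastforce)
    then show ?thesis using lenG T'nL by (simp add: psi_d_def)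
  qed
  show ?thesis using inCl part1 part2 by blast
qed

end
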